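(* Let $G$ be a loop-less digraph on $n$ vertices in which every vertex has in-degree at least $1$, and let $\mathring{G}$ be the digraph obtained from $G$ by adding a loop on every vertex. Then $\mathring{G}$ admits a boolean nilpotent function of class at most $4$. Moreover, if $G$ is symmetric or has a vertex of out-degree $n-1$, then $\mathring{G}$ admits a boolean nilpotent function of class at most $3$.
   Context: A digraph is symmetric if for every arc $(u,v)$, $(v,u)$ is also an arc. A boolean function on $[n]$ is a map $f:\{0,1\}^n\to\{0,1\}^n$; its (unsigned) interaction graph has an arc $(j,i)$ iff $f_i$ depends essentially on $x_j$, i.e. $f_i(a)\neq f_i(b)$ for some $a,b$ differing only in coordinate $j$ (loops included). A digraph $H$ on $[n]$ admits $f$ if the interaction graph of $f$ equals $H$. $f$ is nilpotent if $f^k$ is constant for some $k\geq 0$ ($f^0=\mathrm{id}$); the least such $k$ is its class. *)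

theory Defs
  imports Main
begin

(* Vertices are the elements of a finite type 'n (so n = CARD('n)); a digraph is a set of arcs
   ('n \<times> 'n) set; a boolean function on the vertex set is a map ('n \<Rightarrow> bool) \<Rightarrow> ('n \<Rightarrow> bool). *)

definition interaction_graph :: "(('n \<Rightarrow> bool) \<Rightarrow> ('n \<Rightarrow> bool)) \<Rightarrow> ('n \<times> 'n) set" where
  "interaction_graph f = {(j, i). \<exists>x. f x i \<noteq> f (x(j := \<not> x j)) i}"

definition admits :: "('n \<times> 'n) set \<Rightarrow> (('n \<Rightarrow> bool) \<Rightarrow> ('n \<Rightarrow> bool)) \<Rightarrow> bool" where
  "admits H f \<longleftrightarrow> interaction_graph f = H"

definition nilpotent_class_le :: "(('n \<Rightarrow> bool) \<Rightarrow> ('n \<Rightarrow> bool)) \<Rightarrow> nat \<Rightarrow> bool" where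
  "nilpotent_class_le f k \<longleftrightarrow> (\<exists>m\<le>k. \<exists>c. \<forall>x. (f ^^ m) x = c)"

definition add_loops :: "('n \<times> 'n) set \<Rightarrow> ('n \<times> 'n) set" where
  "add_loops G = G \<union> Id"

end

theory Submission
  imports Defs
begin

definition tr :: "nat \<Rightarrow> nat \<Rightarrow> bool" where
"tr a b \<longleftrightarrow> (b = 0 \<and> a \<noteq> 0) \<or> (b = 1 \<and> a = 0) \<or> (b = 2 \<and> a = 1)"

definition good3 :: "'n set \<Rightarrow> ('n \<times> 'n) set \<Rightarrow> ('n \<Rightarrow> nat) \<Rightarrow> bool" where
"good3 V E c \<longleftrightarrow> (\<forall>i\<in>V. \<exists>j\<in>V. (j,i)\<in>E \<and> tr (c j) (c i))"

definition F :: "('n \<Rightarrow> nat) \<Rightarrow> ('n \<times> 'n) set \<Rightarrow> ('n \<Rightarrow> bool) \<Rightarrow> ('n \<Rightarrow> bool)" where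
"F c G x i = (if c i = 0 then \<not> x i \<and> (\<forall>j. (j,i)\<in>G \<longrightarrow> \<not> x j)
             else x i \<or> (\<exists>j. (j,i)\<in>G \<and> x j \<noteq> (c j = 0)))"

lemma F_A: "c i = 0 \<Longrightarrow> F c G x i \<Longrightarrow> \<not> x i" by (simp add: F_def)
lemma F_mono: "c i \<noteq> 0 \<Longrightarrow> x i \<Longrightarrow> F c G x i" by (simp add: F_def)
lemma F_B: "c i \<noteq> 0 \<Longrightarrow> (j,i)\<in>G \<Longrightarrow> c j = 0 \<Longrightarrow> \<not> x j \<Longrightarrow> F c G x i" by (auto simp add: F_def)
lemma F_C: "c i \<noteq> 0 \<Longrightarrow> (j,i)\<in>G \<Longrightarrow> c j \<noteq> 0 \<Longrightarrow> x j \<Longrightarrow> F c G x i" by (auto simp add: F_def)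
lemma F_Z: "c i = 0 \<Longrightarrow> (j,i)\<in>G \<Longrightarrow> x j \<Longrightarrow> \<not> F c G x i" by (auto simp add: F_def)

lemma g_range: "good3 V E c \<Longrightarrow> i\<in>V \<Longrightarrow> c i = 0 \<or> c i = 1 \<or> c i = 2"
  unfolding good3_def tr_def by blast
lemma g0: "good3 V E c \<Longrightarrow> i\<in>V \<Longrightarrow> c i = 0 \<Longrightarrow> \<exists>j\<in>V. (j,i)\<in>E \<and> c j \<noteq> 0"
  unfolding good3_def tr_def by force
lemma g1: "good3 V E c \<Longrightarrow> i\<in>V \<Longrightarrow> c i = 1 \<Longrightarrow> \<exists>j\<in>V. (j,i)\<in>E \<and> c j = 0"
  unfolding good3_def tr_def by force
lemma g2: "good3 V E c \<Longrightarrow> i\<in>V \<Longrightarrow> c i = 2 \<Longrightarrow> \<exists>j\<in>V. (j,i)\<in>E \<and> c j = 1"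
  unfolding good3_def tr_def by force

lemma step2:
  assumes g: "good3 UNIV G c" and ci: "c i = 1"
  shows "F c G (F c G x) i"
proof -
  from g1[OF g _ ci] obtain a where a: "(a,i)\<in>G" "c a = 0" by blast
  have ci0: "c i \<noteq> 0" using ci by simp
  show ?thesis
  proof (cases "F c G x i")
    case True then show ?thesis by (rule F_mono[of c i, OF ci0])
  next
    case False
    have "\<not> F c G x a"
    proof
      assume "F c G x a"
      then have "\<not> x a" by (rule F_A[of c a, OF a(2)])
      then have "F c G x i" by (rule F_B[of c i a, OF ci0 a])
      with False show False by simp
    qed
    then show ?thesis by (rule F_B[of c i a, OF ci0 a])
  qed
qed

lemma step3:
  assumes g: "good3 UNIV G c" and ci: "c i \<noteq> 0"
  shows "F c G (F c G (F c G x)) i"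
proof -
  have "c i = 0 \<or> c i = 1 \<or> c i = 2" using g_range[OF g] by blast
  then have "c i = 1 \<or> c i = 2" using ci by simp
  then show ?thesis
  proof
    assume "c i = 1" then show ?thesis using step2[OF g] by blast
  next
    assume c2: "c i = 2"
    from g2[OF g _ c2] obtain b where b: "(b,i)\<in>G" "c b = 1" by blast
    have "F c G (F c G x) b" using step2[OF g b(2)] .
    moreover have "c i \<noteq> 0" "c b \<noteq> 0" using c2 b(2) by simp_all
    ultimately show ?thesis using F_C[of c i b G "F c G (F c G x)"] b(1) by blast
  qed
qed

lemma nil4:
  assumes g: "good3 UNIV G c"
  shows "(F c G ^^ 4) x = (\<lambda>i. c i \<noteq> 0)"
proof
  fix i
  have e: "(F c G ^^ 4) x = F c G (F c G (F c G (F c G x)))"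
    by (simp add: numeral_eq_Suc)
  show "(F c G ^^ 4) x i = (c i \<noteq> 0)"
  proof (cases "c i = 0")
    case True
    from g0[OF g _ True] obtain j where j: "(j,i)\<in>G" "c j \<noteq> 0" by blast
    have "F c G (F c G (F c G x)) j" using step3[OF g j(2)] .
    then have "\<not> F c G (F c G (F c G (F c G x))) i" using F_Z[of c i j G "F c G (F c G (F c G x))"] True j(1) by blast
    then show ?thesis using e True by simp
  next
    case False
    have "F c G (F c G (F c G (F c G x))) i" using step3[OF g False, of "F c G x"] .
    then show ?thesis using e False by simp
  qed
qed

lemma nil3:
  assumes g: "good3 UNIV G c" and n2: "\<forall>i. c i \<noteq> 2"
  shows "(F c G ^^ 3) x = (\<lambda>i. c i \<noteq> 0)"
proof
  fix i
  have e: "(F c G ^^ 3) x = F c G (F c G (F c G x))"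
    by (simp add: numeral_eq_Suc)
  show "(F c G ^^ 3) x i = (c i \<noteq> 0)"
  proof (cases "c i = 0")
    case True
    from g0[OF g _ True] obtain j where j: "(j,i)\<in>G" "c j \<noteq> 0" by blast
    have "c j = 0 \<or> c j = 1 \<or> c j = 2" using g_range[OF g] by blast
    then have "c j = 1" using j(2) n2 by simp
    then have "F c G (F c G x) j" using step2[OF g] by blast
    then have "\<not> F c G (F c G (F c G x)) i" using F_Z[of c i j G "F c G (F c G x)"] True j(1) by blast
    then show ?thesis using e True by simp
  next
    case False
    have "F c G (F c G (F c G x)) i" using step3[OF g False, of x] .
    then show ?thesis using e False by simp
  qed
qed

lemma ig_sub:
  assumes nj: "j \<noteq> i" "(j,i) \<notin> G"
  shows "F c G x i = F c G (x(j := \<not> x j)) i"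
proof -
  have h1: "\<And>k. (k,i)\<in>G \<Longrightarrow> (x(j := \<not> x j)) k = x k" using nj by auto
  have h2: "(x(j := \<not> x j)) i = x i" using nj by auto
  have e1: "(\<forall>k. (k,i)\<in>G \<longrightarrow> \<not> (x(j := \<not> x j)) k) = (\<forall>k. (k,i)\<in>G \<longrightarrow> \<not> x k)"
    using h1 by (metis (no_types, lifting))
  have e2: "(\<exists>k. (k,i)\<in>G \<and> (x(j := \<not> x j)) k \<noteq> (c k = 0)) = (\<exists>k. (k,i)\<in>G \<and> x k \<noteq> (c k = 0))"
    using h1 by (metis (no_types, lifting))
  show ?thesis unfolding F_def h2 e1 e2 ..
qed

lemma ig_sup:
  assumes loopless: "\<forall>v. (v, v) \<notin> G" and ji: "j = i \<or> (j,i)\<in>G"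
  shows "\<exists>x. F c G x i \<noteq> F c G (x(j := \<not> x j)) i"
proof (cases "c i = 0")
  case ci0: True
  let ?x = "\<lambda>_::'a. False"
  have a: "F c G ?x i" unfolding F_def using ci0 by simp
  have b: "\<not> F c G (?x(j := \<not> ?x j)) i"
  proof (cases "j = i")
    case True
    then show ?thesis unfolding F_def using ci0 by simp
  next
    case False
    then have "(j,i) \<in> G" using ji by simp
    moreover have "(?x(j := \<not> ?x j)) j" by simp
    ultimately show ?thesis using F_Z[of c i j G "?x(j := \<not> ?x j)", OF ci0] by blast
  qed
  show ?thesis using a b by blast
next
  case False
  let ?z = "\<lambda>k. k \<noteq> i \<and> c k = 0"
  have z1: "\<forall>k. (k,i)\<in>G \<longrightarrow> ?z k = (c k = 0)" using loopless by auto
  have z2: "\<not> (\<exists>k. (k,i)\<in>G \<and> ?z k \<noteq> (c k = 0))" using z1 by blast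
  have a: "\<not> F c G ?z i" unfolding F_def using False z2 by simp
  have b: "F c G (?z(j := \<not> ?z j)) i"
  proof (cases "j = i")
    case True
    then show ?thesis using F_mono[of c i, OF False] by simp
  next
    case nj: False
    then have ji': "(j,i) \<in> G" using ji by simp
    have "(?z(j := \<not> ?z j)) j \<noteq> (c j = 0)" using nj by simp
    then have "\<exists>k. (k,i)\<in>G \<and> (?z(j := \<not> ?z j)) k \<noteq> (c k = 0)" using ji' by blast
    then show ?thesis unfolding F_def if_not_P[OF False] by blast
  qed
  show ?thesis using a b by blast
qed

lemma ig:
  assumes loopless: "\<forall>v. (v, v) \<notin> G"
  shows "interaction_graph (F c G) = add_loops G"
proof (rule set_eqI, clarify)
  fix j i
  show "((j,i) \<in> interaction_graph (F c G)) = ((j,i) \<in> add_loops G)"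
  proof
    assume "(j,i) \<in> interaction_graph (F c G)"
    then obtain x where x: "F c G x i \<noteq> F c G (x(j := \<not> x j)) i" unfolding interaction_graph_def by auto
    show "(j,i) \<in> add_loops G"
    proof (rule ccontr)
      assume "(j,i) \<notin> add_loops G"
      then have nj: "j \<noteq> i" "(j,i) \<notin> G" unfolding add_loops_def by auto
      have "F c G x i = F c G (x(j := \<not> x j)) i" by (rule ig_sub[OF nj])
      then show False using x by simp
    qed
  next
    assume "(j,i) \<in> add_loops G"
    then have "j = i \<or> (j,i)\<in>G" unfolding add_loops_def by auto
    then have "\<exists>x. F c G x i \<noteq> F c G (x(j := \<not> x j)) i" by (rule ig_sup[OF loopless])
    then show "(j,i) \<in> interaction_graph (F c G)" unfolding interaction_graph_def by auto
  qed
qed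

lemma tr_irr: "\<not> tr a a" unfolding tr_def by auto

lemma ext3:
  assumes "\<forall>i\<in>W. \<exists>j\<in>U. (j,i)\<in>E \<and> tr (c j) (c i)" "W \<subseteq> U" "U \<subseteq> V"
    "\<forall>k\<in>U. c' k = c k" "\<forall>i\<in>V-W. \<exists>j\<in>V. (j,i)\<in>E \<and> tr (c' j) (c' i)"
  shows "good3 V E c'"
  unfolding good3_def
proof
  fix i assume i: "i \<in> V"
  show "\<exists>j\<in>V. (j,i)\<in>E \<and> tr (c' j) (c' i)"
  proof (cases "i \<in> W")
    case True
    then obtain j where j: "j\<in>U" "(j,i)\<in>E" "tr (c j) (c i)" using assms(1) by blast
    have "c' j = c j" "c' i = c i" using assms(2,4) j(1) True by auto
    then show ?thesis using j assms(3) by auto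
  next
    case False
    then show ?thesis using assms(5) i by blast
  qed
qed

lemma col:
  assumes "finite V" "\<forall>i\<in>V. \<exists>j\<in>V. j \<noteq> i \<and> (j,i)\<in>E"
  shows "\<exists>c. good3 V E c \<and> (sym E \<longrightarrow> (\<forall>i\<in>V. c i \<noteq> 2))"
  using assms
proof (induction "card V" arbitrary: V E rule: less_induct)
  case less
  note fin = less.prems(1) and hyp = less.prems(2)
  show ?case
  proof (cases "\<exists>v\<in>V. \<forall>i\<in>V-{v}. \<exists>j\<in>V-{v}. j \<noteq> i \<and> (j,i)\<in>E")
    case True
    then obtain v where v: "v\<in>V" and h': "\<forall>i\<in>V-{v}. \<exists>j\<in>V-{v}. j \<noteq> i \<and> (j,i)\<in>E" by blast
    have "card (V-{v}) < card V" using fin v by (meson card_Diff1_less)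
    then obtain c where c: "good3 (V-{v}) E c" and cs: "sym E \<longrightarrow> (\<forall>i\<in>V-{v}. c i \<noteq> 2)"
      using less.hyps[of "V-{v}" E] fin h' by blast
    obtain u where u: "u\<in>V" "u\<noteq>v" "(u,v)\<in>E" using hyp v by blast
    define c' where "c' = c(v := if c u = 0 then 1 else 0)"
    have "good3 V E c'"
    proof (rule ext3[where W="V-{v}" and U="V-{v}" and c=c])
      show "\<forall>i\<in>V-{v}. \<exists>j\<in>V-{v}. (j,i)\<in>E \<and> tr (c j) (c i)" using c unfolding good3_def .
      show "\<forall>k\<in>V-{v}. c' k = c k" unfolding c'_def by simp
      have "tr (c' u) (c' v)" unfolding c'_def tr_def using u(2) by simp
      then show "\<forall>i\<in>V-(V-{v}). \<exists>j\<in>V. (j,i)\<in>E \<and> tr (c' j) (c' i)" using u v by blast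
    qed auto
    moreover have "sym E \<longrightarrow> (\<forall>i\<in>V. c' i \<noteq> 2)" using cs unfolding c'_def by auto
    ultimately show ?thesis by blast
  next
    case False
    show ?thesis
    proof (cases "V = {}")
      case True
      then show ?thesis unfolding good3_def by blast
    next
      case Vne: False
      have "\<forall>v\<in>V. \<exists>i. i\<in>V \<and> i \<noteq> v \<and> (\<forall>j\<in>V. j \<noteq> v \<longrightarrow> j \<noteq> i \<longrightarrow> (j,i)\<notin>E)"
        using False by blast
      then have "\<exists>s. \<forall>v\<in>V. s v\<in>V \<and> s v \<noteq> v \<and> (\<forall>j\<in>V. j \<noteq> v \<longrightarrow> j \<noteq> s v \<longrightarrow> (j, s v)\<notin>E)"
        by (rule bchoice)
      then obtain s where s: "\<forall>v\<in>V. s v\<in>V \<and> s v \<noteq> v \<and> (\<forall>j\<in>V. j \<noteq> v \<longrightarrow> j \<noteq> s v \<longrightarrow> (j, s v)\<notin>E)"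
        by blast
      have sE: "\<forall>v\<in>V. (v, s v)\<in>E"
      proof
        fix v assume v: "v\<in>V"
        then have "s v \<in> V" using s by blast
        then obtain j where "j\<in>V" "j \<noteq> s v" "(j, s v)\<in>E" using hyp by blast
        then show "(v, s v)\<in>E" using s v by metis
      qed
      have sinj: "inj_on s V"
      proof (rule inj_onI)
        fix a b assume ab: "a\<in>V" "b\<in>V" "s a = s b"
        have "(a, s b)\<in>E" using sE ab by metis
        moreover have "a \<noteq> s b" using s ab by metis
        ultimately show "a = b" using s ab by metis
      qed
      have "s ` V \<subseteq> V" using s by blast
      then have sV: "s ` V = V" by (rule endo_inj_surj[OF fin _ sinj])
      have "\<forall>i\<in>V. \<exists>v. v\<in>V \<and> s v = i"
      proof
        fix i assume "i\<in>V"
        then have "i \<in> s ` V" using sV by simp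
        then show "\<exists>v. v\<in>V \<and> s v = i" by blast
      qed
      then have "\<exists>q. \<forall>i\<in>V. q i \<in> V \<and> s (q i) = i" by (rule bchoice)
      then obtain q where qp: "\<forall>i\<in>V. q i \<in> V \<and> s (q i) = i" by blast
      have qs: "\<forall>v\<in>V. q (s v) = v"
      proof
        fix v assume v: "v\<in>V"
        then have "s v \<in> V" using s by blast
        then have "q (s v) \<in> V" "s (q (s v)) = s v" using qp by auto
        then show "q (s v) = v" using sinj v unfolding inj_on_def by blast
      qed
      have qE: "\<forall>i\<in>V. (q i, i) \<in> E" using qp sE by metis
      have qne: "\<forall>i\<in>V. q i \<noteq> i" using qp s by metis
      have qU: "\<forall>i\<in>V. \<forall>j\<in>V. j \<noteq> i \<longrightarrow> (j,i)\<in>E \<longrightarrow> j = q i" using qp s by metis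
      obtain v where v: "v\<in>V" using Vne by blast
      define w where "w = s v"
      define x where "x = s w"
      define u where "u = q v"
      have wV: "w\<in>V" and xV: "x\<in>V" and uV: "u\<in>V" unfolding w_def x_def u_def using s qp v by auto
      have qw: "q w = v" unfolding w_def using qs v by blast
      have qx: "q x = w" unfolding x_def using qs wV by blast
      have vw: "v \<noteq> w" unfolding w_def using s v by metis
      have sinjV: "\<And>a b. a\<in>V \<Longrightarrow> b\<in>V \<Longrightarrow> s a = s b \<Longrightarrow> a = b" using sinj inj_on_def by metis
      have sVV: "\<And>a. a\<in>V \<Longrightarrow> s a \<in> V" using s by blast
      show ?thesis
      proof (cases "x = v")
        case x2: True
        have "s (q v) = s w" using qp v x2 x_def by simp
        then have qv: "q v = w" using sinjV qp v wV by blast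
        define V' where "V' = V - {v,w}"
        have "V' \<subset> V" unfolding V'_def using v by auto
        then have "card V' < card V" by (rule psubset_card_mono[OF fin])
        moreover have h': "\<forall>i\<in>V'. \<exists>j\<in>V'. j \<noteq> i \<and> (j,i)\<in>E"
        proof
          fix i assume i: "i\<in>V'"
          then have iV: "i\<in>V" "i \<noteq> v" "i \<noteq> w" unfolding V'_def by auto
          have "q i \<noteq> v" using qp iV w_def by metis
          moreover have "q i \<noteq> w" using qp iV x_def x2 by metis
          ultimately have "q i \<in> V'" unfolding V'_def using qp iV by auto
          then show "\<exists>j\<in>V'. j \<noteq> i \<and> (j,i)\<in>E" using qE qne iV by blast
        qed
        moreover have "finite V'" unfolding V'_def using fin by simp
        ultimately obtain c where c: "good3 V' E c" and cs: "sym E \<longrightarrow> (\<forall>i\<in>V'. c i \<noteq> 2)"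
          using less.hyps[of V' E] by blast
        define c' where "c' = c(v := 0, w := 1)"
        have "good3 V E c'"
        proof (rule ext3[where W="V'" and U="V'" and c=c])
          show "\<forall>i\<in>V'. \<exists>j\<in>V'. (j,i)\<in>E \<and> tr (c j) (c i)" using c unfolding good3_def .
          show "\<forall>k\<in>V'. c' k = c k" unfolding c'_def V'_def by simp
          show "V' \<subseteq> V" unfolding V'_def by auto
          have "(w,v)\<in>E" using qE v qv by metis
          moreover have "(v,w)\<in>E" using qE wV qw by metis
          moreover have "tr (c' w) (c' v)" "tr (c' v) (c' w)" unfolding c'_def tr_def using vw by auto
          moreover have "V - V' = {v,w}" unfolding V'_def using v wV by auto
          ultimately show "\<forall>i\<in>V-V'. \<exists>j\<in>V. (j,i)\<in>E \<and> tr (c' j) (c' i)" using v wV by auto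
        qed auto
        moreover have "sym E \<longrightarrow> (\<forall>i\<in>V. c' i \<noteq> 2)" using cs unfolding c'_def V'_def by auto
        ultimately show ?thesis by blast
      next
        case xv: False
        have uw: "u \<noteq> w"
        proof
          assume "u = w"
          then have "s u = s w" by simp
          then have "v = x" unfolding x_def u_def using qp v by metis
          then show False using xv by simp
        qed
        have nsym: "\<not> sym E"
        proof
          assume "sym E"
          then have "(w,v) \<in> E" using qE wV qw unfolding sym_def by metis
          then have "w = q v" using qU v wV vw by metis
          then show False using uw u_def by simp
        qed
        have uv: "u \<noteq> v" unfolding u_def using qne v by blast
        show ?thesis
        proof (cases "x = u")
          case x3: True
          have su: "s u = v" unfolding u_def using qp v by blast
          have qu: "q u = w" using x3 qx by simp
          define V' where "V' = V - {u,v,w}"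
          have "V' \<subset> V" unfolding V'_def using v by auto
        then have "card V' < card V" by (rule psubset_card_mono[OF fin])
          moreover have h': "\<forall>i\<in>V'. \<exists>j\<in>V'. j \<noteq> i \<and> (j,i)\<in>E"
          proof
            fix i assume i: "i\<in>V'"
            then have iV: "i\<in>V" "i \<noteq> v" "i \<noteq> w" "i \<noteq> u" unfolding V'_def by auto
            have "q i \<noteq> v" using qp iV w_def by metis
            moreover have "q i \<noteq> w" using qp iV x_def x3 by metis
            moreover have "q i \<noteq> u" using qp iV su by metis
            ultimately have "q i \<in> V'" unfolding V'_def using qp iV by auto
            then show "\<exists>j\<in>V'. j \<noteq> i \<and> (j,i)\<in>E" using qE qne iV by blast
          qed
          moreover have "finite V'" unfolding V'_def using fin by simp
          ultimately obtain c where c: "good3 V' E c"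
            using less.hyps[of V' E] by blast
          define c' where "c' = c(u := 0, v := 1, w := 2)"
          have "good3 V E c'"
          proof (rule ext3[where W="V'" and U="V'" and c=c])
            show "\<forall>i\<in>V'. \<exists>j\<in>V'. (j,i)\<in>E \<and> tr (c j) (c i)" using c unfolding good3_def .
            show "\<forall>k\<in>V'. c' k = c k" unfolding c'_def V'_def by simp
            show "V' \<subseteq> V" unfolding V'_def by auto
            have "(w,u)\<in>E" using qE uV qu by metis
            moreover have "(u,v)\<in>E" using qE v u_def by metis
            moreover have "(v,w)\<in>E" using qE wV qw by metis
            moreover have "tr (c' w) (c' u)" "tr (c' u) (c' v)" "tr (c' v) (c' w)"
              unfolding c'_def tr_def using vw uv uw by auto
            moreover have "V - V' = {u,v,w}" unfolding V'_def using v wV uV by auto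
            ultimately show "\<forall>i\<in>V-V'. \<exists>j\<in>V. (j,i)\<in>E \<and> tr (c' j) (c' i)" using v wV uV by auto
          qed auto
          then show ?thesis using nsym by blast
        next
          case x4: False
          define V' where "V' = V - {v,w}"
          define E' where "E' = insert (u,x) E"
          have xw: "x \<noteq> w" unfolding x_def using s wV by metis
          have uV': "u \<in> V'" and xV': "x \<in> V'" unfolding V'_def using uV xV uv uw xv xw by auto
          have "V' \<subset> V" unfolding V'_def using v by auto
        then have "card V' < card V" by (rule psubset_card_mono[OF fin])
          moreover have h': "\<forall>i\<in>V'. \<exists>j\<in>V'. j \<noteq> i \<and> (j,i)\<in>E'"
          proof
            fix i assume i: "i\<in>V'"
            then have iV: "i\<in>V" "i \<noteq> v" "i \<noteq> w" unfolding V'_def by auto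
            show "\<exists>j\<in>V'. j \<noteq> i \<and> (j,i)\<in>E'"
            proof (cases "i = x")
              case True
              then show ?thesis using uV' x4 unfolding E'_def by auto
            next
              case ix: False
              have "q i \<noteq> v" using qp iV w_def by metis
              moreover have "q i \<noteq> w" using qp iV x_def ix by metis
              ultimately have "q i \<in> V'" unfolding V'_def using qp iV by auto
              then show ?thesis using qE qne iV unfolding E'_def by blast
            qed
          qed
          moreover have "finite V'" unfolding V'_def using fin by simp
          ultimately obtain c where c: "good3 V' E' c"
            using less.hyps[of V' E'] by blast
          have tux: "tr (c u) (c x)"
          proof -
            obtain j where j: "j\<in>V'" "(j,x)\<in>E'" "tr (c j) (c x)" using c xV' unfolding good3_def by blast
            have "j \<noteq> x" using j(3) tr_irr by metis
            show ?thesis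
            proof (cases "j = u")
              case True then show ?thesis using j by simp
            next
              case False
              then have "(j,x)\<in>E" using j(2) unfolding E'_def by auto
              then have "j = w" using qU xV j(1) \<open>j \<noteq> x\<close> qx unfolding V'_def by auto
              then show ?thesis using j(1) unfolding V'_def by simp
            qed
          qed
          define c' where "c' = c(v := (if c u = 0 then 1 else 0), w := (if c u = 0 then 0 else 1))"
          have "good3 V E c'"
          proof (rule ext3[where W="V' - {x}" and U="V'" and c=c])
            show "\<forall>i\<in>V'-{x}. \<exists>j\<in>V'. (j,i)\<in>E \<and> tr (c j) (c i)"
            proof
              fix i assume i: "i\<in>V'-{x}"
              then obtain j where j: "j\<in>V'" "(j,i)\<in>E'" "tr (c j) (c i)" using c unfolding good3_def by blast
              have "(j,i)\<in>E" using j(2) i unfolding E'_def by auto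
              then show "\<exists>j\<in>V'. (j,i)\<in>E \<and> tr (c j) (c i)" using j by blast
            qed
            show "\<forall>k\<in>V'. c' k = c k" unfolding c'_def V'_def by simp
            show "V' \<subseteq> V" unfolding V'_def by auto
            have cu': "c' u = c u" "c' x = c x" unfolding c'_def using uv uw xv xw by auto
            have "(u,v)\<in>E" using qE v u_def by metis
            moreover have "(v,w)\<in>E" using qE wV qw by metis
            moreover have "(w,x)\<in>E" using qE xV qx by metis
            moreover have "tr (c' u) (c' v)" "tr (c' v) (c' w)" "tr (c' w) (c' x)"
              unfolding cu' unfolding c'_def using vw tux unfolding tr_def by auto
            moreover have "V - (V' - {x}) = {v,w,x}" unfolding V'_def using v wV xV xv xw by auto
            ultimately show "\<forall>i\<in>V-(V'-{x}). \<exists>j\<in>V. (j,i)\<in>E \<and> tr (c' j) (c' i)" using v wV uV by auto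
          qed auto
          then show ?thesis using nsym by blast
        qed
      qed
    qed
  qed
qed


lemma fin4:
  assumes loopless: "\<forall>v. (v, v) \<notin> G" and c: "good3 UNIV G c"
  shows "\<exists>f. admits (add_loops G) f \<and> nilpotent_class_le f 4"
proof -
  have a: "admits (add_loops G) (F c G)" unfolding admits_def by (rule ig[OF loopless])
  have n: "\<forall>x. (F c G ^^ 4) x = (\<lambda>i. c i \<noteq> 0)" using nil4[OF c] by blast
  have "nilpotent_class_le (F c G) 4"
    unfolding nilpotent_class_le_def
    apply (rule exI[of _ "4::nat"])
    apply (rule conjI)
     apply (rule order_refl)
    apply (rule exI[of _ "\<lambda>i. c i \<noteq> 0"])
    by (rule n)
  then show ?thesis using a by blast
qed

lemma fin3:
  assumes loopless: "\<forall>v. (v, v) \<notin> G" and c: "good3 UNIV G c" and n2: "\<forall>i. c i \<noteq> 2"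
  shows "\<exists>f. admits (add_loops G) f \<and> nilpotent_class_le f 3"
proof -
  have a: "admits (add_loops G) (F c G)" unfolding admits_def by (rule ig[OF loopless])
  have n: "\<forall>x. (F c G ^^ 3) x = (\<lambda>i. c i \<noteq> 0)" using nil3[OF c n2] by blast
  have "nilpotent_class_le (F c G) 3"
    unfolding nilpotent_class_le_def
    apply (rule exI[of _ "3::nat"])
    apply (rule conjI)
     apply (rule order_refl)
    apply (rule exI[of _ "\<lambda>i. c i \<noteq> 0"])
    by (rule n)
  then show ?thesis using a by blast
qed

theorem theorem6:
  fixes G :: "('n::finite \<times> 'n) set"
  assumes loopless: "\<forall>v. (v, v) \<notin> G"
    and indeg: "\<forall>i. card {j. (j, i) \<in> G} \<ge> 1"
  shows "(\<exists>f. admits (add_loops G) f \<and> nilpotent_class_le f 4)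
       \<and> ((sym G \<or> (\<exists>v. card {u. (v, u) \<in> G} = card (UNIV :: 'n set) - 1))
            \<longrightarrow> (\<exists>f. admits (add_loops G) f \<and> nilpotent_class_le f 3))"
proof -
  have hyp: "\<forall>i\<in>(UNIV::'n set). \<exists>j\<in>UNIV. j \<noteq> i \<and> (j,i)\<in>G"
  proof
    fix i :: 'n
    have "card {j. (j,i)\<in>G} \<ge> 1" using indeg by blast
    then have "{j. (j,i)\<in>G} \<noteq> {}" by (metis card.empty not_one_le_zero)
    then obtain j where j: "(j,i)\<in>G" by blast
    then have "j \<noteq> i" using loopless by metis
    then show "\<exists>j\<in>UNIV. j \<noteq> i \<and> (j,i)\<in>G" using j by blast
  qed
  have finU: "finite (UNIV::'n set)" by simp
  obtain c where c: "good3 UNIV G c" and cs: "sym G \<longrightarrow> (\<forall>i\<in>UNIV. c i \<noteq> 2)"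
    using col[OF finU hyp] by blast
  have P1: "\<exists>f. admits (add_loops G) f \<and> nilpotent_class_le f 4" by (rule fin4[OF loopless c])
  have P2: "\<exists>f. admits (add_loops G) f \<and> nilpotent_class_le f 3"
    if h: "sym G \<or> (\<exists>v. card {u. (v, u) \<in> G} = card (UNIV :: 'n set) - 1)"
  proof (cases "sym G")
    case True
    then have "\<forall>i. c i \<noteq> 2" using cs by blast
    then show ?thesis by (rule fin3[OF loopless c])
  next
    case False
    then obtain v where v: "card {u. (v, u) \<in> G} = card (UNIV :: 'n set) - 1" using h by blast
    have sub: "{u. (v, u) \<in> G} \<subseteq> UNIV - {v}" using loopless by auto
    have "card (UNIV - {v}) = card (UNIV :: 'n set) - 1" using finU by (simp add: card_Diff_singleton)
    then have "card {u. (v, u) \<in> G} = card (UNIV - {v})" using v by simp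
    then have eqS: "{u. (v, u) \<in> G} = UNIV - {v}" using card_subset_eq[OF _ sub] finU by blast
    have out: "\<And>u. u \<noteq> v \<Longrightarrow> (v,u)\<in>G"
    proof -
      fix u assume "u \<noteq> v"
      then have "u \<in> UNIV - {v}" by simp
      then have "u \<in> {u. (v, u) \<in> G}" using eqS by simp
      then show "(v,u)\<in>G" by simp
    qed
    define c2 where "c2 = (\<lambda>i. if i = v then 0 else (1::nat))"
    have g2: "good3 UNIV G c2"
      unfolding good3_def
    proof
      fix i :: 'n
      show "\<exists>j\<in>UNIV. (j,i)\<in>G \<and> tr (c2 j) (c2 i)"
      proof (cases "i = v")
        case True
        obtain j where j: "j \<noteq> i" "(j,i)\<in>G" using hyp by blast
        have "tr (c2 j) (c2 i)" unfolding c2_def tr_def using j(1) True by simp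
        then show ?thesis using j by blast
      next
        case False
        have "tr (c2 v) (c2 i)" unfolding c2_def tr_def using False by simp
        then show ?thesis using out[OF False] by blast
      qed
    qed
    have "\<forall>i. c2 i \<noteq> 2" unfolding c2_def by simp
    then show ?thesis by (rule fin3[OF loopless g2])
  qed
  show ?thesis using P1 P2 by blast
qed

end
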